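(* Let $A$ be an irreducible $\{0,1\}$-matrix which is not a permutation matrix, and let $\mathcal{C}$ be a right Markov code for $(X_A,\sigma_A)$. Then the one-sided topological Markov shift $(X_{A(\mathcal{C})},\sigma_{A(\mathcal{C})})$ is continuously orbit equivalent to $(X_A,\sigma_A)$.
   Context: For an $N\times N$ matrix $A=[A(i,j)]_{i,j=1}^N$ with entries in $\{0,1\}$, put $\Sigma_A=\{1,\dots,N\}$ and let $X_A$ be the set of sequences $(x_n)_{n\in\mathbb{N}}$ in $\Sigma_A$ with $A(x_n,x_{n+1})=1$ for all $n$, with the product topology and the shift $\sigma_A((x_n)_n)=(x_{n+1})_n$. $B_k(X_A)$ is the set of admissible words of length $k$, $B_0(X_A)$ the empty word, $B_*(X_A)=\bigcup_{k\ge0}B_k(X_A)$. For a word $w=w_1\cdots w_\ell$ put $\sigma_A(w)=w_2\cdots w_\ell$. A code is a nonempty $\mathcal{C}\subset B_*(X_A)$ such that any equality $\omega(i_1)\cdots\omega(i_k)=\omega(j_1)\cdots\omega(j_n)$ of concatenations of words of $\mathcal{C}$ forces $n=k$ and $\omega(i_m)=\omega(j_m)$ for all $m$; a prefix code is a code in which no word is a prefix of another. A finite prefix code $\mathcal{C}=\{\omega(1),\dots,\omega(M)\}\subset B_*(X_A)$, $\Sigma_{A(\mathcal{C})}=\{1,\dots,M\}$, is a right Markov code for $(X_A,\sigma_A)$ if: (i) for every $\gamma\in B_*(X_A)$ there is $\eta\in B_*(X_A)$ with $\gamma\eta\in B_*(X_A)$ and a unique finite sequence $(i_1,\dots,i_k)$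 in $\Sigma_{A(\mathcal{C})}$ with $\gamma\eta=\omega(i_1)\cdots\omega(i_k)$; (ii) there is $L\in\mathbb{N}$ such that for all $i_1,\dots,i_L\in\Sigma_{A(\mathcal{C})}$ with $\omega(i_1)\cdots\omega(i_L)\in B_*(X_A)$ there exist $j_1,\dots,j_k\in\Sigma_{A(\mathcal{C})}$ with $\sigma_A(\omega(i_1))\omega(i_2)\cdots\omega(i_L)=\omega(j_1)\cdots\omega(j_k)$; (iii) for every $i,j$ there are $n_1,\dots,n_l\in\Sigma_{A(\mathcal{C})}$ with $\omega(i)\omega(n_1)\cdots\omega(n_l)\omega(j)\in B_*(X_A)$. $A(\mathcal{C})$ is the $M\times M$ matrix with $A(\mathcal{C})(i,j)=A(r(\omega(i)),s(\omega(j)))$, where $s(\omega(i)),r(\omega(i))$ denote the first and last symbols of $\omega(i)$. $(X_A,\sigma_A)$ and $(X_B,\sigma_B)$ are continuously orbit equivalent if there exist a homeomorphism $h:X_A\to X_B$ and continuous maps $k_1,l_1:X_A\to\mathbb{Z}_+$, $k_2,l_2:X_B\to\mathbb{Z}_+$ with $\sigma_B^{k_1(x)}(h(\sigma_A(x)))=\sigma_B^{l_1(x)}(h(x))$ for $x\in X_A$ and $\sigma_A^{k_2(y)}(h^{-1}(\sigma_B(y)))=\sigma_A^{l_2(y)}(h^{-1}(y))$ for $y\in X_B$. *)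

theory Defs
  imports "HOL-Analysis.Analysis"
begin

text \<open>An N x N matrix is represented as a function nat => nat => nat, only its
entries at indices in {1..N} being relevant. Symbols are Sigma_A = {1..N}.\<close>

definition zero_one_matrix :: "nat \<Rightarrow> (nat \<Rightarrow> nat \<Rightarrow> nat) \<Rightarrow> bool" where
  "zero_one_matrix N A \<longleftrightarrow> (\<forall>i\<in>{1..N}. \<forall>j\<in>{1..N}. A i j \<in> {0, 1})"

fun matpow :: "nat \<Rightarrow> (nat \<Rightarrow> nat \<Rightarrow> nat) \<Rightarrow> nat \<Rightarrow> nat \<Rightarrow> nat \<Rightarrow> nat" where
  "matpow N A 0 = (\<lambda>i j. if i = j then 1 else 0)"
| "matpow N A (Suc n) = (\<lambda>i j. \<Sum>k\<in>{1..N}. matpow N A n i k * A k j)"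

definition irreducible_matrix :: "nat \<Rightarrow> (nat \<Rightarrow> nat \<Rightarrow> nat) \<Rightarrow> bool" where
  "irreducible_matrix N A \<longleftrightarrow> (\<forall>i\<in>{1..N}. \<forall>j\<in>{1..N}. \<exists>n>0. matpow N A n i j > 0)"

definition permutation_matrix :: "nat \<Rightarrow> (nat \<Rightarrow> nat \<Rightarrow> nat) \<Rightarrow> bool" where
  "permutation_matrix N A \<longleftrightarrow> zero_one_matrix N A \<and>
     (\<forall>i\<in>{1..N}. card {j\<in>{1..N}. A i j = 1} = 1) \<and>
     (\<forall>j\<in>{1..N}. card {i\<in>{1..N}. A i j = 1} = 1)"

definition XA :: "nat \<Rightarrow> (nat \<Rightarrow> nat \<Rightarrow> nat) \<Rightarrow> (nat \<Rightarrow> nat) set" where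
  "XA N A = {x. \<forall>n. x n \<in> {1..N} \<and> A (x n) (x (Suc n)) = 1}"

definition topXA :: "nat \<Rightarrow> (nat \<Rightarrow> nat \<Rightarrow> nat) \<Rightarrow> (nat \<Rightarrow> nat) topology" where
  "topXA N A = subtopology (product_topology (\<lambda>_. discrete_topology {1..N}) UNIV) (XA N A)"

definition shift :: "(nat \<Rightarrow> nat) \<Rightarrow> (nat \<Rightarrow> nat)" where
  "shift x = (\<lambda>n. x (Suc n))"

definition Bstar :: "nat \<Rightarrow> (nat \<Rightarrow> nat \<Rightarrow> nat) \<Rightarrow> nat list set" where
  "Bstar N A = {w. set w \<subseteq> {1..N} \<and> (\<forall>k. Suc k < length w \<longrightarrow> A (w ! k) (w ! Suc k) = 1)}"

definition is_code :: "nat \<Rightarrow> (nat \<Rightarrow> nat \<Rightarrow> nat) \<Rightarrow> nat list set \<Rightarrow> bool" where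
  "is_code N A C \<longleftrightarrow> C \<noteq> {} \<and> C \<subseteq> Bstar N A \<and>
     (\<forall>us vs. set us \<subseteq> C \<longrightarrow> set vs \<subseteq> C \<longrightarrow> concat us = concat vs \<longrightarrow> us = vs)"

definition is_prefix_code :: "nat \<Rightarrow> (nat \<Rightarrow> nat \<Rightarrow> nat) \<Rightarrow> nat list set \<Rightarrow> bool" where
  "is_prefix_code N A C \<longleftrightarrow> is_code N A C \<and>
     (\<forall>u\<in>C. \<forall>v\<in>C. u \<noteq> v \<longrightarrow> \<not> (\<exists>t. v = u @ t))"

definition right_markov_code ::
  "nat \<Rightarrow> (nat \<Rightarrow> nat \<Rightarrow> nat) \<Rightarrow> nat \<Rightarrow> (nat \<Rightarrow> nat list) \<Rightarrow> bool" where
  "right_markov_code N A M \<omega> \<longleftrightarrow>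
     inj_on \<omega> {1..M} \<and> is_prefix_code N A (\<omega> ` {1..M}) \<and>
     \<comment> \<open>(i)\<close>
     (\<forall>\<gamma>\<in>Bstar N A. \<exists>\<eta>. \<gamma> @ \<eta> \<in> Bstar N A \<and>
        (\<exists>!is. set is \<subseteq> {1..M} \<and> \<gamma> @ \<eta> = concat (map \<omega> is))) \<and>
     \<comment> \<open>(ii)\<close>
     (\<exists>L\<ge>1. \<forall>is. length is = L \<longrightarrow> set is \<subseteq> {1..M} \<longrightarrow> concat (map \<omega> is) \<in> Bstar N A \<longrightarrow>
        (\<exists>js. set js \<subseteq> {1..M} \<and>
           tl (\<omega> (hd is)) @ concat (map \<omega> (tl is)) = concat (map \<omega> js))) \<and>
     \<comment> \<open>(iii)\<close>
     (\<forall>i\<in>{1..M}. \<forall>j\<in>{1..M}. \<exists>ns. set ns \<subseteq> {1..M} \<and>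
        \<omega> i @ concat (map \<omega> ns) @ \<omega> j \<in> Bstar N A)"

definition code_matrix :: "(nat \<Rightarrow> nat \<Rightarrow> nat) \<Rightarrow> (nat \<Rightarrow> nat list) \<Rightarrow> nat \<Rightarrow> nat \<Rightarrow> nat" where
  "code_matrix A \<omega> i j = A (last (\<omega> i)) (hd (\<omega> j))"

definition cont_orbit_equiv ::
  "nat \<Rightarrow> (nat \<Rightarrow> nat \<Rightarrow> nat) \<Rightarrow> nat \<Rightarrow> (nat \<Rightarrow> nat \<Rightarrow> nat) \<Rightarrow> bool" where
  "cont_orbit_equiv N A M B \<longleftrightarrow>
     (\<exists>h g k1 l1 k2 l2.
        homeomorphic_maps (topXA N A) (topXA M B) h g \<and>
        continuous_map (topXA N A) (discrete_topology (UNIV::nat set)) k1 \<and>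
        continuous_map (topXA N A) (discrete_topology (UNIV::nat set)) l1 \<and>
        continuous_map (topXA M B) (discrete_topology (UNIV::nat set)) k2 \<and>
        continuous_map (topXA M B) (discrete_topology (UNIV::nat set)) l2 \<and>
        (\<forall>x\<in>XA N A. (shift ^^ k1 x) (h (shift x)) = (shift ^^ l1 x) (h x)) \<and>
        (\<forall>y\<in>XA M B. (shift ^^ k2 y) (g (shift y)) = (shift ^^ l2 y) (g y)))"

end

theory Submission
  imports Defs
begin

definition pre :: "'a list \<Rightarrow> (nat \<Rightarrow> 'a) \<Rightarrow> nat \<Rightarrow> 'a" where
  "pre w z = (\<lambda>n. if n < length w then w ! n else z (n - length w))"

lemma pre_append: "pre (u @ v) z = pre u (pre v z)"
  by (auto simp: pre_def nth_append fun_eq_iff)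

lemma pre_Nil[simp]: "pre [] z = z"
  by (simp add: pre_def)

lemma shift_pre_Cons: "shift (pre (a # w) z) = pre w z"
  by (auto simp: shift_def pre_def fun_eq_iff)

lemma funpow_shift: "(shift ^^ k) x = (\<lambda>n. x (n + k))"
  by (induction k) (auto simp: shift_def)

lemma funpow_shift_pre: "(shift ^^ length w) (pre w z) = z"
  by (simp add: funpow_shift pre_def)

lemma map_pre: "map (pre w z) [0..<length w] = w"
  by (rule nth_equalityI) (simp_all add: pre_def)

lemma shift_XA: "x \<in> XA N A \<Longrightarrow> shift x \<in> XA N A"
  by (simp add: XA_def shift_def)

lemma funpow_shift_XA: "x \<in> XA N A \<Longrightarrow> (shift ^^ k) x \<in> XA N A"
  by (simp add: XA_def funpow_shift)

lemma XA_range: "z \<in> XA N A \<Longrightarrow> z n \<in> {1..N}"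
  by (simp add: XA_def)

lemma Bstar_Nil: "[] \<in> Bstar N A"
  by (simp add: Bstar_def)

lemma Bstar_single: "[a] \<in> Bstar N A \<longleftrightarrow> a \<in> {1..N}"
  by (simp add: Bstar_def)

lemma Bstar_Cons2: "a # b # w \<in> Bstar N A \<longleftrightarrow> a \<in> {1..N} \<and> A a b = 1 \<and> b # w \<in> Bstar N A"
proof
  assume H: "a # b # w \<in> Bstar N A"
  have all: "\<forall>k. Suc k < length (a#b#w) \<longrightarrow> A ((a#b#w)!k) ((a#b#w)!Suc k) = 1"
    and st: "set (a#b#w) \<subseteq> {1..N}" using H by (simp_all add: Bstar_def)
  have "A a b = 1" using all[rule_format, of 0] by simp
  moreover have "b # w \<in> Bstar N A"
    unfolding Bstar_def
  proof (intro CollectI conjI allI impI)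
    show "set (b # w) \<subseteq> {1..N}" using st by simp
    fix k assume "Suc k < length (b # w)"
    then show "A ((b # w) ! k) ((b # w) ! Suc k) = 1"
      using all[rule_format, of "Suc k"] by simp
  qed
  ultimately show "a \<in> {1..N} \<and> A a b = 1 \<and> b # w \<in> Bstar N A" using st by simp
next
  assume H: "a \<in> {1..N} \<and> A a b = 1 \<and> b # w \<in> Bstar N A"
  have all: "\<forall>k. Suc k < length (b#w) \<longrightarrow> A ((b#w)!k) ((b#w)!Suc k) = 1"
    and st: "set (b#w) \<subseteq> {1..N}" using H by (simp_all add: Bstar_def)
  show "a # b # w \<in> Bstar N A"
    unfolding Bstar_def
  proof (intro CollectI conjI allI impI)
    show "set (a # b # w) \<subseteq> {1..N}" using H st by simp
    fix k assume k: "Suc k < length (a # b # w)"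
    show "A ((a # b # w) ! k) ((a # b # w) ! Suc k) = 1"
    proof (cases k)
      case 0 then show ?thesis using H by simp
    next
      case (Suc k')
      then show ?thesis using all[rule_format, of k'] k by simp
    qed
  qed
qed

lemma Bstar_append: "u \<in> Bstar N A \<Longrightarrow> v \<in> Bstar N A \<Longrightarrow> u \<noteq> [] \<Longrightarrow> v \<noteq> []
  \<Longrightarrow> A (last u) (hd v) = 1 \<Longrightarrow> u @ v \<in> Bstar N A"
proof (induction u)
  case Nil then show ?case by simp
next
  case (Cons a u)
  note IH = Cons.IH and pr = Cons.prems
  show ?case
  proof (cases u)
    case Nil
    then obtain b v' where v: "v = b # v'" using pr by (cases v) auto
    then show ?thesis using pr Nil by (auto simp: Bstar_Cons2 Bstar_single)
  next
    case (Cons b u')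
    have "u \<in> Bstar N A" using pr Cons by (simp add: Bstar_Cons2)
    then have "u @ v \<in> Bstar N A" using IH pr Cons by simp
    then show ?thesis using pr Cons by (simp add: Bstar_Cons2)
  qed
qed

lemma Bstar_prefix: "u @ v \<in> Bstar N A \<Longrightarrow> u \<in> Bstar N A"
  unfolding Bstar_def
proof (intro CollectI conjI allI impI)
  assume H: "u @ v \<in> {w. set w \<subseteq> {1..N} \<and> (\<forall>k. Suc k < length w \<longrightarrow> A (w ! k) (w ! Suc k) = 1)}"
  then show "set u \<subseteq> {1..N}" by auto
  fix k assume k: "Suc k < length u"
  have "A ((u@v) ! k) ((u@v) ! Suc k) = 1" using H k by auto
  then show "A (u ! k) (u ! Suc k) = 1" using k by (simp add: nth_append)
qed

lemma map_XA_Bstar: "x \<in> XA N A \<Longrightarrow> map x [i..<j] \<in> Bstar N A"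
  unfolding Bstar_def XA_def by auto

lemma topspace_topXA: "topspace (topXA N A) = XA N A"
  unfolding topXA_def by (auto simp: topspace_product_topology XA_def PiE_def)

lemma proj_cont: "continuous_map (topXA N A) (discrete_topology {1..N}) (\<lambda>z. z i)"
  unfolding topXA_def
  by (rule continuous_map_from_subtopology) (rule continuous_map_product_projection, simp)

lemma cyl_open: "openin (topXA N A) {z \<in> XA N A. \<forall>i<n. z i = x i}"
proof (induction n)
  case 0
  have "{z \<in> XA N A. \<forall>i<0. z i = x i} = topspace (topXA N A)" by (simp add: topspace_topXA)
  then show ?case by simp
next
  case (Suc n)
  have o: "openin (topXA N A) {z \<in> topspace (topXA N A). z n \<in> {x n} \<inter> {1..N}}"
    by (rule openin_continuous_map_preimage[OF proj_cont]) simp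
  have eq: "{z \<in> XA N A. \<forall>i<Suc n. z i = x i} = {z \<in> XA N A. \<forall>i<n. z i = x i} \<inter> {z \<in> topspace (topXA N A). z n \<in> {x n} \<inter> {1..N}}"
    unfolding topspace_topXA
  proof (intro equalityI subsetI)
    fix z assume "z \<in> {z \<in> XA N A. \<forall>i<Suc n. z i = x i}"
    then show "z \<in> {z \<in> XA N A. \<forall>i<n. z i = x i} \<inter> {z \<in> XA N A. z n \<in> {x n} \<inter> {1..N}}"
      using XA_range[of z N A n] by auto
  next
    fix z assume "z \<in> {z \<in> XA N A. \<forall>i<n. z i = x i} \<inter> {z \<in> XA N A. z n \<in> {x n} \<inter> {1..N}}"
    then show "z \<in> {z \<in> XA N A. \<forall>i<Suc n. z i = x i}"
      by (auto simp: less_Suc_eq)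
  qed
  have "openin (topXA N A) ({z \<in> XA N A. \<forall>i<n. z i = x i} \<inter> {z \<in> topspace (topXA N A). z n \<in> {x n} \<inter> {1..N}})"
    by (rule openin_Int[OF Suc.IH o])
  then show ?case by (simp only: eq)
qed

lemma loc_const_cont:
  assumes "\<forall>x\<in>XA N A. f x \<in> U"
    and "\<forall>x\<in>XA N A. \<exists>n. \<forall>z\<in>XA N A. (\<forall>i<n. z i = x i) \<longrightarrow> f z = f x"
  shows "continuous_map (topXA N A) (discrete_topology U) f"
proof -
  have 1: "f \<in> topspace (topXA N A) \<rightarrow> topspace (discrete_topology U)"
    apply (simp only: topspace_topXA topspace_discrete_topology)
    apply (rule Pi_I)
    using assms(1) by simp
  have 2: "openin (topXA N A) {x \<in> topspace (topXA N A). f x \<in> V}" for V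
  proof (subst openin_subopen, intro ballI)
    fix x assume x: "x \<in> {x \<in> topspace (topXA N A). f x \<in> V}"
    then have xX: "x \<in> XA N A" and fx: "f x \<in> V" by (simp_all add: topspace_topXA)
    then obtain n where n: "\<forall>z\<in>XA N A. (\<forall>i<n. z i = x i) \<longrightarrow> f z = f x"
      using assms(2) by blast
    have "{z \<in> XA N A. \<forall>i<n. z i = x i} \<subseteq> {x \<in> topspace (topXA N A). f x \<in> V}"
    proof
      fix z assume "z \<in> {z \<in> XA N A. \<forall>i<n. z i = x i}"
      then show "z \<in> {x \<in> topspace (topXA N A). f x \<in> V}"
        using n fx by (simp add: topspace_topXA)
    qed
    moreover have "x \<in> {z \<in> XA N A. \<forall>i<n. z i = x i}" using xX by simp
    ultimately show "\<exists>T. openin (topXA N A) T \<and> x \<in> T \<and> T \<subseteq> {x \<in> topspace (topXA N A). f x \<in> V}"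
      using cyl_open[of N A n x] by blast
  qed
  show ?thesis unfolding continuous_map_def using 1 2 by blast
qed

lemma cont_into_topXA:
  assumes "\<forall>y\<in>XA M B. f y \<in> XA N A"
    and "\<And>k. continuous_map (topXA M B) (discrete_topology {1..N}) (\<lambda>y. f y k)"
  shows "continuous_map (topXA M B) (topXA N A) f"
  unfolding topXA_def[of N A] continuous_map_in_subtopology continuous_map_componentwise_UNIV
proof (intro conjI allI)
  show "continuous_map (topXA M B) (discrete_topology {1..N}) (\<lambda>x. f x k)" for k by (rule assms(2))
  show "f \<in> topspace (topXA M B) \<rightarrow> XA N A"
    apply (simp only: topspace_topXA)
    apply (rule Pi_I)
    using assms(1) by simp
qed

locale rmc =
  fixes N :: nat and A :: "nat \<Rightarrow> nat \<Rightarrow> nat" and M :: nat and \<omega> :: "nat \<Rightarrow> nat list"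
  assumes rmc: "right_markov_code N A M \<omega>"
begin

abbreviation "CM \<equiv> code_matrix A \<omega>"

lemma inj: "inj_on \<omega> {1..M}"
  using rmc by (simp add: right_markov_code_def)

lemma pc: "is_prefix_code N A (\<omega> ` {1..M})"
  using rmc by (simp add: right_markov_code_def)

lemma code_Bstar: "i \<in> {1..M} \<Longrightarrow> \<omega> i \<in> Bstar N A"
  using pc by (auto simp: is_prefix_code_def is_code_def)

lemma nonempty: "i \<in> {1..M} \<Longrightarrow> \<omega> i \<noteq> []"
proof
  assume i: "i \<in> {1..M}" and e: "\<omega> i = []"
  have "\<forall>us vs. set us \<subseteq> \<omega> ` {1..M} \<longrightarrow> set vs \<subseteq> \<omega> ` {1..M} \<longrightarrow> concat us = concat vs \<longrightarrow> us = vs"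
    using pc by (simp add: is_prefix_code_def is_code_def)
  then have "[[]] = ([] :: nat list list)"
    apply (drule_tac x="[[]]" in spec)
    apply (drule_tac x="[]" in spec)
    using i e by (metis concat.simps(1) concat.simps(2) empty_set empty_subsetI image_eqI insert_subset list.set(2) self_append_conv2)
  then show False by simp
qed

lemma prefix_eq: "i \<in> {1..M} \<Longrightarrow> j \<in> {1..M} \<Longrightarrow> \<omega> j = \<omega> i @ t \<Longrightarrow> i = j"
proof -
  assume i: "i \<in> {1..M}" and j: "j \<in> {1..M}" and e: "\<omega> j = \<omega> i @ t"
  have "\<forall>u\<in>\<omega> ` {1..M}. \<forall>v\<in>\<omega> ` {1..M}. u \<noteq> v \<longrightarrow> \<not> (\<exists>t. v = u @ t)"
    using pc by (simp add: is_prefix_code_def)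
  then have "\<omega> i = \<omega> j" using i j e by blast
  then show "i = j" using inj i j by (meson inj_onD)
qed

lemma M_pos: "1 \<le> M"
proof (rule ccontr)
  assume "\<not> 1 \<le> M"
  then have "{1..M} = {}" by simp
  then show False using pc by (simp add: is_prefix_code_def is_code_def)
qed

definition Lmax where "Lmax = Max ((\<lambda>i. length (\<omega> i)) ` {1..M})"

lemma len_le: "i \<in> {1..M} \<Longrightarrow> length (\<omega> i) \<le> Lmax"
  unfolding Lmax_def by (rule Max_ge) auto

lemma Lmax_pos: "1 \<le> Lmax"
proof -
  have "1 \<in> {1..M}" using M_pos by simp
  then have "\<omega> 1 \<noteq> []" "length (\<omega> 1) \<le> Lmax" using nonempty len_le by auto
  then show ?thesis by (cases "\<omega> 1") auto
qed

definition P :: "(nat \<Rightarrow> nat) \<Rightarrow> nat \<Rightarrow> nat list" where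
  "P y k = concat (map (\<lambda>i. \<omega> (y i)) [0..<k])"

definition h :: "(nat \<Rightarrow> nat) \<Rightarrow> nat \<Rightarrow> nat" where
  "h y n = P y (Suc n) ! n"

lemma P_0[simp]: "P y 0 = []" by (simp add: P_def)

lemma P_Suc: "P y (Suc k) = P y k @ \<omega> (y k)" by (simp add: P_def)

lemma P_Suc': "P y (Suc k) = \<omega> (y 0) @ P (shift y) k"
  unfolding P_def shift_def by (simp only: map_upt_Suc) simp

lemma P_add: "P y (k + m) = P y k @ P ((shift ^^ k) y) m"
  by (induction m) (simp_all add: P_Suc funpow_shift add.commute)

lemma P_len: "(\<forall>n. \<omega> (y n) \<noteq> []) \<Longrightarrow> k \<le> length (P y k)"
proof (induction k)
  case 0 then show ?case by simp
next
  case (Suc k)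
  have "\<omega> (y k) \<noteq> []" using Suc.prems by blast
  then have "1 \<le> length (\<omega> (y k))" by (cases "\<omega> (y k)") auto
  then show ?case using Suc by (simp add: P_Suc)
qed

lemma P_prefix: "k \<le> k' \<Longrightarrow> \<exists>s. P y k' = P y k @ s"
  using P_add[of y k "k' - k"] by auto

lemma hP: "(\<forall>n. \<omega> (y n) \<noteq> []) \<Longrightarrow> n < length (P y k) \<Longrightarrow> h y n = P y k ! n"
proof -
  assume ne: "\<forall>n. \<omega> (y n) \<noteq> []" and n: "n < length (P y k)"
  show ?thesis
  proof (cases "k \<le> Suc n")
    case True
    then obtain s where "P y (Suc n) = P y k @ s" using P_prefix by blast
    then show ?thesis using n by (simp add: h_def nth_append)
  next
    case False
    then obtain s where s: "P y k = P y (Suc n) @ s" using P_prefix[of "Suc n" k y] by auto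
    have "n < length (P y (Suc n))" using P_len[OF ne, of "Suc n"] by simp
    then show ?thesis using s by (simp add: h_def nth_append)
  qed
qed

lemma ne_shift: "(\<forall>n. \<omega> (y n) \<noteq> []) \<Longrightarrow> (\<forall>n. \<omega> ((shift ^^ k) y n) \<noteq> [])"
  by (simp add: funpow_shift)

lemma hcons: "(\<forall>n. \<omega> (y n) \<noteq> []) \<Longrightarrow> h y = pre (\<omega> (y 0)) (h (shift y))"
proof
  fix n
  assume ne: "\<forall>n. \<omega> (y n) \<noteq> []"
  have ne': "\<forall>n. \<omega> (shift y n) \<noteq> []" using ne by (simp add: shift_def)
  define l where "l = length (\<omega> (y 0))"
  show "h y n = pre (\<omega> (y 0)) (h (shift y)) n"
  proof (cases "n < l")
    case True
    have "P y 1 = \<omega> (y 0)" using P_Suc[of y 0] by simp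
    then have "h y n = \<omega> (y 0) ! n" using hP[OF ne, of n 1] True l_def by simp
    then show ?thesis using True l_def by (simp add: pre_def)
  next
    case False
    define m where "m = n - l"
    have nm: "n = l + m" using False m_def by simp
    have e: "P y (Suc (Suc m)) = \<omega> (y 0) @ P (shift y) (Suc m)" by (rule P_Suc')
    have "Suc m \<le> length (P (shift y) (Suc m))" by (rule P_len[OF ne'])
    then have "n < length (P y (Suc (Suc m)))" using e nm l_def by simp
    then have "h y n = P y (Suc (Suc m)) ! n" using hP[OF ne] by blast
    also have "\<dots> = P (shift y) (Suc m) ! m" using e nm l_def by (simp add: nth_append)
    also have "\<dots> = h (shift y) m" by (simp add: h_def)
    finally show ?thesis using False nm l_def by (simp add: pre_def)
  qed
qed

lemma hP_pre: "(\<forall>n. \<omega> (y n) \<noteq> []) \<Longrightarrow> h y = pre (P y k) (h ((shift ^^ k) y))"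
proof (induction k)
  case 0 then show ?case by simp
next
  case (Suc k)
  have "h ((shift ^^ k) y) = pre (\<omega> ((shift ^^ k) y 0)) (h (shift ((shift ^^ k) y)))"
    by (rule hcons[OF ne_shift[OF Suc.prems]])
  moreover have "(shift ^^ k) y 0 = y k" by (simp add: funpow_shift)
  ultimately show ?case using Suc by (simp add: P_Suc pre_append)
qed

lemma h_shift: "(\<forall>n. \<omega> (y n) \<noteq> []) \<Longrightarrow> h (shift y) = (shift ^^ length (\<omega> (y 0))) (h y)"
  using hcons[of y] by (simp add: funpow_shift_pre)

lemma h_pre: "(\<forall>n. \<omega> (z n) \<noteq> []) \<Longrightarrow> set js \<subseteq> {1..M} \<Longrightarrow> h (pre js z) = pre (concat (map \<omega> js)) (h z)"
proof (induction js)
  case Nil then show ?case by simp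
next
  case (Cons j js)
  have ne: "\<forall>n. \<omega> (pre (j # js) z n) \<noteq> []"
  proof
    fix n show "\<omega> (pre (j # js) z n) \<noteq> []"
    proof (cases "n < length (j # js)")
      case True
      then have eq: "pre (j # js) z n = (j # js) ! n" by (simp add: pre_def)
      have "pre (j # js) z n \<in> set (j # js)" unfolding eq by (rule nth_mem[OF True])
      then show ?thesis using Cons.prems(2) nonempty by blast
    next
      case False then show ?thesis using Cons.prems(1) by (simp add: pre_def)
    qed
  qed
  have "h (pre (j # js) z) = pre (\<omega> j) (h (shift (pre (j # js) z)))"
    using hcons[OF ne] by (simp add: pre_def)
  also have "\<dots> = pre (\<omega> j) (h (pre js z))" by (simp add: shift_pre_Cons)
  also have "\<dots> = pre (\<omega> j) (pre (concat (map \<omega> js)) (h z))" using Cons by simp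
  finally show ?case by (simp add: pre_append)
qed

end

context rmc begin

lemma XB_ne: "y \<in> XA M CM \<Longrightarrow> \<forall>n. \<omega> (y n) \<noteq> []"
  using XA_range[of y M CM] nonempty by blast

lemma XB_link: "y \<in> XA M CM \<Longrightarrow> A (last (\<omega> (y n))) (hd (\<omega> (y (Suc n)))) = 1"
  by (simp add: XA_def code_matrix_def)

lemma last_P: "(\<forall>n. \<omega> (y n) \<noteq> []) \<Longrightarrow> last (P y (Suc k)) = last (\<omega> (y k))"
  by (simp add: P_Suc)

lemma P_Bstar: "y \<in> XA M CM \<Longrightarrow> P y k \<in> Bstar N A"
proof (induction k)
  case 0 then show ?case by (simp add: Bstar_Nil)
next
  case (Suc k)
  note IH = Suc.IH and yX = Suc.prems
  have ne: "\<forall>n. \<omega> (y n) \<noteq> []" using XB_ne[OF yX] .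
  have wk: "\<omega> (y k) \<in> Bstar N A" using code_Bstar XA_range[OF yX] by blast
  show ?case
  proof (cases k)
    case 0 then show ?thesis using wk by (simp add: P_Suc)
  next
    case (Suc k')
    have "P y k \<noteq> []" using P_len[OF ne, of k] Suc by auto
    moreover have "A (last (P y k)) (hd (\<omega> (y k))) = 1"
      using Suc last_P[OF ne, of k'] XB_link[OF yX, of k'] by simp
    ultimately show ?thesis using Bstar_append[of "P y k" N A "\<omega> (y k)"] IH yX wk ne
      by (simp add: P_Suc)
  qed
qed

lemma Bstar_nth: "w \<in> Bstar N A \<Longrightarrow> Suc n < length w \<Longrightarrow> w ! n \<in> {1..N} \<and> A (w ! n) (w ! Suc n) = 1"
proof -
  assume w: "w \<in> Bstar N A" and n: "Suc n < length w"
  have "w ! n \<in> set w" using n by simp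
  then have "w ! n \<in> {1..N}" using w unfolding Bstar_def by blast
  moreover have "A (w ! n) (w ! Suc n) = 1" using w n unfolding Bstar_def by blast
  ultimately show ?thesis by blast
qed

lemma h_XA: "y \<in> XA M CM \<Longrightarrow> h y \<in> XA N A"
proof -
  assume yX: "y \<in> XA M CM"
  have ne: "\<forall>n. \<omega> (y n) \<noteq> []" using XB_ne[OF yX] .
  have "h y n \<in> {1..N} \<and> A (h y n) (h y (Suc n)) = 1" for n
  proof -
    have l: "Suc (Suc n) \<le> length (P y (Suc (Suc n)))" by (rule P_len[OF ne])
    then have "h y n = P y (Suc (Suc n)) ! n" "h y (Suc n) = P y (Suc (Suc n)) ! Suc n"
      using hP[OF ne] by auto
    then show ?thesis using Bstar_nth[OF P_Bstar[OF yX], of n "Suc (Suc n)"] l by simp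
  qed
  then show ?thesis by (simp add: XA_def)
qed

lemma h_prefix: "(\<forall>n. \<omega> (y n) \<noteq> []) \<Longrightarrow> map (h y) [0..<length (\<omega> (y 0))] = \<omega> (y 0)"
  using hcons[of y] map_pre by metis

lemma prefix_unique1: "i \<in> {1..M} \<Longrightarrow> j \<in> {1..M} \<Longrightarrow> map x [0..<length (\<omega> i)] = \<omega> i
   \<Longrightarrow> map x [0..<length (\<omega> j)] = \<omega> j \<Longrightarrow> length (\<omega> i) \<le> length (\<omega> j) \<Longrightarrow> i = j"
proof -
  assume i: "i \<in> {1..M}" and j: "j \<in> {1..M}" and xi: "map x [0..<length (\<omega> i)] = \<omega> i"
    and xj: "map x [0..<length (\<omega> j)] = \<omega> j" and le: "length (\<omega> i) \<le> length (\<omega> j)"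
  have "take (length (\<omega> i)) (\<omega> j) = \<omega> i"
    using le xi xj by (metis min.absorb1 take_map take_upt add_0)
  then have "\<omega> j = \<omega> i @ drop (length (\<omega> i)) (\<omega> j)" by (metis append_take_drop_id)
  then show "i = j" using prefix_eq[OF i j] by blast
qed

lemma prefix_unique: "i \<in> {1..M} \<Longrightarrow> j \<in> {1..M} \<Longrightarrow> map x [0..<length (\<omega> i)] = \<omega> i
   \<Longrightarrow> map x [0..<length (\<omega> j)] = \<omega> j \<Longrightarrow> i = j"
  using prefix_unique1[of i j x] prefix_unique1[of j i x] by (cases "length (\<omega> i) \<le> length (\<omega> j)") auto

lemma h_inj0: "y \<in> XA M CM \<Longrightarrow> y' \<in> XA M CM \<Longrightarrow> h y = h y' \<Longrightarrow> y 0 = y' 0"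
  using h_prefix[OF XB_ne, of y] h_prefix[OF XB_ne, of y'] XA_range[of y M CM 0] XA_range[of y' M CM 0]
    prefix_unique[of "y 0" "y' 0" "h y"] by simp

lemma h_inj_n: "y \<in> XA M CM \<Longrightarrow> y' \<in> XA M CM \<Longrightarrow> h y = h y' \<Longrightarrow> y n = y' n"
proof (induction n arbitrary: y y')
  case 0 then show ?case using h_inj0 by blast
next
  case (Suc n)
  have e0: "y 0 = y' 0" using h_inj0 Suc.prems by blast
  have "h (shift y) = h (shift y')"
    using h_shift[OF XB_ne[OF Suc.prems(1)]] h_shift[OF XB_ne[OF Suc.prems(2)]] e0 Suc.prems(3) by simp
  then have "shift y n = shift y' n" using Suc.IH shift_XA Suc.prems by blast
  then show ?case by (simp add: shift_def)
qed

lemma h_inj: "inj_on h (XA M CM)"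
  by (rule inj_onI) (use h_inj_n in blast)

end

context rmc begin

lemma cond_i: "\<gamma> \<in> Bstar N A \<Longrightarrow> \<exists>\<eta> is. set is \<subseteq> {1..M} \<and> \<gamma> @ \<eta> = concat (map \<omega> is)"
proof -
  assume g: "\<gamma> \<in> Bstar N A"
  have "\<forall>\<gamma>\<in>Bstar N A. \<exists>\<eta>. \<gamma> @ \<eta> \<in> Bstar N A \<and>
        (\<exists>!is. set is \<subseteq> {1..M} \<and> \<gamma> @ \<eta> = concat (map \<omega> is))"
    using rmc unfolding right_markov_code_def apply (elim conjE) by assumption
  then have "\<exists>\<eta>. \<gamma> @ \<eta> \<in> Bstar N A \<and>
        (\<exists>!is. set is \<subseteq> {1..M} \<and> \<gamma> @ \<eta> = concat (map \<omega> is))" using g by (rule bspec)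
  then obtain \<eta> where "\<gamma> @ \<eta> \<in> Bstar N A \<and> (\<exists>!is. set is \<subseteq> {1..M} \<and> \<gamma> @ \<eta> = concat (map \<omega> is))" by (elim exE)
  then have "\<exists>!is. set is \<subseteq> {1..M} \<and> \<gamma> @ \<eta> = concat (map \<omega> is)" by (rule conjunct2)
  then have "\<exists>is. set is \<subseteq> {1..M} \<and> \<gamma> @ \<eta> = concat (map \<omega> is)" by (rule ex1_implies_ex)
  then show ?thesis by (rule exI)
qed

lemma first_ex: "x \<in> XA N A \<Longrightarrow> \<exists>i. i \<in> {1..M} \<and> map x [0..<length (\<omega> i)] = \<omega> i"
proof -
  assume xX: "x \<in> XA N A"
  define \<gamma> where "\<gamma> = map x [0..<Lmax]"
  have "\<gamma> \<in> Bstar N A" unfolding \<gamma>_def by (rule map_XA_Bstar[OF xX])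
  then obtain \<eta> "is" where ks: "set is \<subseteq> {1..M}" and e: "\<gamma> @ \<eta> = concat (map \<omega> is)"
    using cond_i by blast
  have lg: "length \<gamma> = Lmax" by (simp add: \<gamma>_def)
  have "is \<noteq> []"
  proof
    assume "is = []"
    then have "\<gamma> = []" using e by simp
    then show False using lg Lmax_pos by simp
  qed
  then obtain i is' where ii: "is = i # is'" by (cases "is") auto
  have i: "i \<in> {1..M}" using ks ii by simp
  have e2: "\<gamma> @ \<eta> = \<omega> i @ concat (map \<omega> is')" using e ii by simp
  have le: "length (\<omega> i) \<le> Lmax" using len_le[OF i] .
  have "take (length (\<omega> i)) (\<gamma> @ \<eta>) = \<omega> i" using e2 by simp
  moreover have "take (length (\<omega> i)) (\<gamma> @ \<eta>) = take (length (\<omega> i)) \<gamma>" using le lg by simp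
  moreover have "take (length (\<omega> i)) \<gamma> = map x [0..<length (\<omega> i)]"
    using le by (simp add: \<gamma>_def take_map take_upt min_def)
  ultimately show ?thesis using i by metis
qed

definition first :: "(nat \<Rightarrow> nat) \<Rightarrow> nat" where
  "first x = (SOME i. i \<in> {1..M} \<and> map x [0..<length (\<omega> i)] = \<omega> i)"

lemma first: "x \<in> XA N A \<Longrightarrow> first x \<in> {1..M} \<and> map x [0..<length (\<omega> (first x))] = \<omega> (first x)"
  unfolding first_def using first_ex by (rule someI_ex) 

primrec remseq :: "(nat \<Rightarrow> nat) \<Rightarrow> nat \<Rightarrow> (nat \<Rightarrow> nat)" where
  "remseq x 0 = x"
| "remseq x (Suc n) = (shift ^^ length (\<omega> (first (remseq x n)))) (remseq x n)"

lemma remseq_XA: "x \<in> XA N A \<Longrightarrow> remseq x n \<in> XA N A"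
  by (induction n) (simp_all add: funpow_shift_XA)

lemma remseq_pre: "x \<in> XA N A \<Longrightarrow> remseq x n = pre (\<omega> (first (remseq x n))) (remseq x (Suc n))"
proof
  fix m
  assume xX: "x \<in> XA N A"
  define r where "r = remseq x n"
  define i where "i = first r"
  have rX: "r \<in> XA N A" using remseq_XA[OF xX] r_def by simp
  have pi: "map r [0..<length (\<omega> i)] = \<omega> i" using first[OF rX] i_def by simp
  have rs: "remseq x (Suc n) = (\<lambda>m. r (m + length (\<omega> i)))" using r_def i_def by (simp add: funpow_shift)
  show "remseq x n m = pre (\<omega> (first (remseq x n))) (remseq x (Suc n)) m"
  proof (cases "m < length (\<omega> i)")
    case True
    have "\<omega> i ! m = r m" using pi True by (metis add_0 diff_zero length_map length_upt nth_map_upt)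
    then show ?thesis using True r_def i_def by (simp add: pre_def)
  next
    case False
    then show ?thesis using rs r_def i_def by (simp add: pre_def)
  qed
qed

lemma x_eq: "x \<in> XA N A \<Longrightarrow> x = pre (P (\<lambda>n. first (remseq x n)) k) (remseq x k)"
proof (induction k)
  case 0 then show ?case by simp
next
  case (Suc k)
  then show ?case using remseq_pre[OF Suc.prems, of k] by (simp add: P_Suc pre_append)
qed

lemma h_back: "(\<forall>n. z n \<in> {1..M}) \<Longrightarrow> h z \<in> XA N A \<Longrightarrow> z \<in> XA M CM"
proof -
  assume zr: "\<forall>n. z n \<in> {1..M}" and hX: "h z \<in> XA N A"
  have ne: "\<forall>n. \<omega> (z n) \<noteq> []" using zr nonempty by blast
  have "CM (z n) (z (Suc n)) = 1" for n
  proof -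
    define w where "w = (shift ^^ n) z"
    have "h z = pre (P z n) (h w)" using hP_pre[OF ne] w_def by blast
    then have "h w = (shift ^^ length (P z n)) (h z)" by (simp add: funpow_shift_pre)
    then have uX: "h w \<in> XA N A" using funpow_shift_XA[OF hX] by simp
    have new: "\<forall>m. \<omega> (w m) \<noteq> []" using ne_shift[OF ne] w_def by blast
    have new': "\<forall>m. \<omega> (shift w m) \<noteq> []" using new by (simp add: shift_def)
    have w0: "w 0 = z n" and w1: "shift w 0 = z (Suc n)" by (simp_all add: w_def funpow_shift shift_def)
    define a where "a = \<omega> (z n)"
    define b where "b = \<omega> (z (Suc n))"
    have hw: "h w = pre a (pre b (h (shift (shift w))))"
      using hcons[OF new] hcons[OF new'] w0 w1 a_def b_def by simp
    have an: "a \<noteq> []" and bn: "b \<noteq> []" using ne a_def b_def by auto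
    have la: "length a - 1 < length a" using an by simp
    have u1: "h w (length a - 1) = last a" using hw la an by (simp add: pre_def last_conv_nth)
    have u2: "h w (Suc (length a - 1)) = hd b" using hw an bn by (simp add: pre_def hd_conv_nth)
    have "A (h w (length a - 1)) (h w (Suc (length a - 1))) = 1" using uX by (simp add: XA_def)
    then show ?thesis using u1 u2 a_def b_def by (simp add: code_matrix_def)
  qed
  then show ?thesis using zr by (simp add: XA_def)
qed

lemma h_surj: "x \<in> XA N A \<Longrightarrow> \<exists>y\<in>XA M CM. h y = x"
proof -
  assume xX: "x \<in> XA N A"
  define y where "y = (\<lambda>n. first (remseq x n))"
  have yr: "\<forall>n. y n \<in> {1..M}" using first[OF remseq_XA[OF xX]] y_def by blast
  have ne: "\<forall>n. \<omega> (y n) \<noteq> []" using yr nonempty by blast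
  have "h y m = x m" for m
  proof -
    have l: "m < length (P y (Suc m))" using P_len[OF ne, of "Suc m"] by simp
    have "x m = pre (P y (Suc m)) (remseq x (Suc m)) m" using x_eq[OF xX, of "Suc m"] y_def by metis
    also have "\<dots> = P y (Suc m) ! m" using l by (simp add: pre_def)
    finally show ?thesis using hP[OF ne l] by simp
  qed
  then have hy: "h y = x" by blast
  then have "y \<in> XA M CM" using h_back yr xX by blast
  then show ?thesis using hy by blast
qed

lemma h_image: "h ` XA M CM = XA N A"
  using h_XA h_surj by blast

definition g where "g = inv_into (XA M CM) h"

lemma g_h: "y \<in> XA M CM \<Longrightarrow> g (h y) = y"
  unfolding g_def by (rule inv_into_f_f[OF h_inj])

lemma h_g: "x \<in> XA N A \<Longrightarrow> h (g x) = x"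
  unfolding g_def using h_image by (metis f_inv_into_f)

lemma g_XA: "x \<in> XA N A \<Longrightarrow> g x \<in> XA M CM"
  unfolding g_def using h_image by (metis inv_into_into)

end

context rmc begin

lemma g0: "x \<in> XA N A \<Longrightarrow> z \<in> XA N A \<Longrightarrow> \<forall>i<Lmax. z i = x i \<Longrightarrow> g z 0 = g x 0"
proof -
  assume xX: "x \<in> XA N A" and zX: "z \<in> XA N A" and ag: "\<forall>i<Lmax. z i = x i"
  define y where "y = g x"
  define y' where "y' = g z"
  have yX: "y \<in> XA M CM" and y'X: "y' \<in> XA M CM" using g_XA xX zX y_def y'_def by auto
  have hy: "h y = x" and hy': "h y' = z" using h_g xX zX y_def y'_def by auto
  have r: "y 0 \<in> {1..M}" "y' 0 \<in> {1..M}" using XA_range yX y'X by auto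
  have p1: "map x [0..<length (\<omega> (y 0))] = \<omega> (y 0)" using h_prefix[OF XB_ne[OF yX]] hy by simp
  have p2: "map z [0..<length (\<omega> (y' 0))] = \<omega> (y' 0)" using h_prefix[OF XB_ne[OF y'X]] hy' by simp
  have "map z [0..<length (\<omega> (y 0))] = map x [0..<length (\<omega> (y 0))]"
    using ag len_le[OF r(1)] by (intro map_cong) auto
  then have "map z [0..<length (\<omega> (y 0))] = \<omega> (y 0)" using p1 by simp
  then have "y 0 = y' 0" by (rule prefix_unique[OF r(1) r(2) _ p2])
  then show ?thesis using y_def y'_def by simp
qed

lemma g_shift: "x \<in> XA N A \<Longrightarrow> g ((shift ^^ length (\<omega> (g x 0))) x) = shift (g x)"
proof -
  assume xX: "x \<in> XA N A"
  define y where "y = g x"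
  have yX: "y \<in> XA M CM" using g_XA xX y_def by auto
  have "h (shift y) = (shift ^^ length (\<omega> (y 0))) x" using h_shift[OF XB_ne[OF yX]] h_g[OF xX] y_def by simp
  then show ?thesis using g_h[OF shift_XA[OF yX]] y_def by simp
qed

lemma g_local: "\<forall>x z. x \<in> XA N A \<longrightarrow> z \<in> XA N A \<longrightarrow> (\<forall>i<Lmax * Suc k. z i = x i) \<longrightarrow> g z k = g x k"
proof (induction k)
  case 0
  have e: "Lmax * Suc 0 = Lmax" by simp
  show ?case unfolding e using g0 by blast
next
  case (Suc k)
  show ?case
  proof (intro allI impI)
    fix x z assume xX: "x \<in> XA N A" and zX: "z \<in> XA N A" and ag: "\<forall>i<Lmax * Suc (Suc k). z i = x i"
    have lm: "Lmax \<le> Lmax * Suc (Suc k)" by simp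
    have "\<forall>i<Lmax. z i = x i" using ag lm by (meson less_le_trans)
    then have e0: "g z 0 = g x 0" using g0 xX zX by blast
    define l where "l = length (\<omega> (g x 0))"
    have "g x 0 \<in> {1..M}" using XA_range g_XA[OF xX] by blast
    then have ll: "l \<le> Lmax" using len_le l_def by simp
    have "\<forall>i<Lmax * Suc k. (shift ^^ l) z i = (shift ^^ l) x i"
    proof (intro allI impI)
      fix i assume i: "i < Lmax * Suc k"
      have "Lmax * Suc (Suc k) = Lmax + Lmax * Suc k" by simp
      then have "i + l < Lmax * Suc (Suc k)" using i ll by linarith
      then have "z (i + l) = x (i + l)" using ag by blast
      then show "(shift ^^ l) z i = (shift ^^ l) x i" by (simp add: funpow_shift)
    qed
    then have "g ((shift ^^ l) z) k = g ((shift ^^ l) x) k"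
      using Suc.IH funpow_shift_XA xX zX by blast
    moreover have "g ((shift ^^ l) x) = shift (g x)" using g_shift[OF xX] l_def by simp
    moreover have "g ((shift ^^ l) z) = shift (g z)" using g_shift[OF zX] l_def e0 by simp
    ultimately show "g z (Suc k) = g x (Suc k)" by (simp add: shift_def)
  qed
qed

lemma cont_h: "continuous_map (topXA M CM) (topXA N A) h"
proof (rule cont_into_topXA)
  show "\<forall>y\<in>XA M CM. h y \<in> XA N A" using h_XA by blast
  fix k
  show "continuous_map (topXA M CM) (discrete_topology {1..N}) (\<lambda>y. h y k)"
  proof (rule loc_const_cont)
    show "\<forall>x\<in>XA M CM. h x k \<in> {1..N}" using h_XA XA_range by blast
    show "\<forall>x\<in>XA M CM. \<exists>n. \<forall>z\<in>XA M CM. (\<forall>i<n. z i = x i) \<longrightarrow> h z k = h x k"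
    proof (intro ballI exI[of _ "Suc k"] impI)
      fix x z :: "nat \<Rightarrow> nat" assume "\<forall>i<Suc k. z i = x i"
      then have "P z (Suc k) = P x (Suc k)" unfolding P_def
        by (intro arg_cong[where f=concat] map_cong) auto
      then show "h z k = h x k" by (simp add: h_def)
    qed
  qed
qed

lemma cont_g: "continuous_map (topXA N A) (topXA M CM) g"
proof (rule cont_into_topXA)
  show "\<forall>y\<in>XA N A. g y \<in> XA M CM" using g_XA by blast
  fix k
  show "continuous_map (topXA N A) (discrete_topology {1..M}) (\<lambda>y. g y k)"
  proof (rule loc_const_cont)
    show "\<forall>x\<in>XA N A. g x k \<in> {1..M}" using g_XA XA_range by blast
    show "\<forall>x\<in>XA N A. \<exists>n. \<forall>z\<in>XA N A. (\<forall>i<n. z i = x i) \<longrightarrow> g z k = g x k"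
      using g_local[of k] by blast
  qed
qed

end

context rmc begin

lemma cond_ii: "\<exists>L\<ge>1. \<forall>is. length is = L \<longrightarrow> set is \<subseteq> {1..M} \<longrightarrow> concat (map \<omega> is) \<in> Bstar N A \<longrightarrow>
        (\<exists>js. set js \<subseteq> {1..M} \<and>
           tl (\<omega> (hd is)) @ concat (map \<omega> (tl is)) = concat (map \<omega> js))"
  using rmc unfolding right_markov_code_def apply (elim conjE) by assumption

lemma main: "cont_orbit_equiv M CM N A"
proof -
  obtain L where L1: "1 \<le> L" and LL: "\<forall>is. length is = L \<longrightarrow> set is \<subseteq> {1..M} \<longrightarrow> concat (map \<omega> is) \<in> Bstar N A \<longrightarrow>
        (\<exists>js. set js \<subseteq> {1..M} \<and>
           tl (\<omega> (hd is)) @ concat (map \<omega> (tl is)) = concat (map \<omega> js))"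
    using cond_ii by blast
  define J where "J = (\<lambda>ks. SOME js. set js \<subseteq> {1..M} \<and>
           tl (\<omega> (hd ks)) @ concat (map \<omega> (tl ks)) = concat (map \<omega> js))"
  define k2 where "k2 = (\<lambda>x. length (J (map (g x) [0..<L])))"
  have orbit2: "(shift ^^ k2 x) (g (shift x)) = (shift ^^ L) (g x)" if xX: "x \<in> XA N A" for x
  proof -
    define y where "y = g x"
    have yX: "y \<in> XA M CM" using g_XA xX y_def by auto
    have ne: "\<forall>n. \<omega> (y n) \<noteq> []" using XB_ne[OF yX] .
    define ks where "ks = map y [0..<L]"
    have cP: "concat (map \<omega> ks) = P y L" by (simp add: P_def ks_def o_def)
    have ksr: "set ks \<subseteq> {1..M}" using XA_range[OF yX] ks_def by auto
    have "\<exists>js. set js \<subseteq> {1..M} \<and> tl (\<omega> (hd ks)) @ concat (map \<omega> (tl ks)) = concat (map \<omega> js)"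
      using LL ksr cP P_Bstar[OF yX, of L] ks_def by simp
    then have js: "set (J ks) \<subseteq> {1..M} \<and> tl (\<omega> (hd ks)) @ concat (map \<omega> (tl ks)) = concat (map \<omega> (J ks))"
      unfolding J_def by (rule someI_ex)
    define js0 where "js0 = J ks"
    have k2x: "k2 x = length js0" using k2_def js0_def ks_def y_def by simp
    define y' where "y' = pre js0 ((shift ^^ L) y)"
    have x1: "x = pre (P y L) (h ((shift ^^ L) y))" using hP_pre[OF ne, of L] h_g[OF xX] y_def by simp
    have ksn: "ks \<noteq> []" using L1 ks_def by simp
    then have "ks = hd ks # tl ks" by simp
    then have c2: "concat (map \<omega> ks) = \<omega> (hd ks) @ concat (map \<omega> (tl ks))" by (metis concat.simps(2) list.simps(9))
    have "hd ks \<in> {1..M}" using ksr ksn by (metis hd_in_set subsetD)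
    then have "\<omega> (hd ks) \<noteq> []" by (rule nonempty)
    then have "\<omega> (hd ks) = hd (\<omega> (hd ks)) # tl (\<omega> (hd ks))" by simp
    then have "P y L = hd (\<omega> (hd ks)) # concat (map \<omega> js0)" using c2 cP js js0_def by (metis append_Cons)
    then have sx: "shift x = pre (concat (map \<omega> js0)) (h ((shift ^^ L) y))"
      using x1 shift_pre_Cons by metis
    have js0r: "set js0 \<subseteq> {1..M}" using js js0_def by blast
    have hy': "h y' = shift x" using h_pre[OF ne_shift[OF ne] js0r] sx y'_def by simp
    have y'r: "\<forall>n. y' n \<in> {1..M}"
    proof
      fix n show "y' n \<in> {1..M}"
      proof (cases "n < length js0")
        case True
        then have "y' n = js0 ! n" by (simp add: y'_def pre_def)
        then show ?thesis using nth_mem[OF True] js0r by auto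
      next
        case False
        then have "y' n = y (n - length js0 + L)" by (simp add: y'_def pre_def funpow_shift)
        then show ?thesis using XA_range[OF yX] by simp
      qed
    qed
    have "y' \<in> XA M CM" using h_back[OF y'r] hy' shift_XA[OF xX] by simp
    then have "g (shift x) = y'" using g_h hy' by metis
    then have "(shift ^^ k2 x) (g (shift x)) = (shift ^^ L) y" using k2x y'_def funpow_shift_pre by simp
    then show ?thesis using y_def by simp
  qed
  have ck2: "continuous_map (topXA N A) (discrete_topology UNIV) k2"
  proof (rule loc_const_cont)
    show "\<forall>x\<in>XA N A. k2 x \<in> UNIV" by simp
    show "\<forall>x\<in>XA N A. \<exists>n. \<forall>z\<in>XA N A. (\<forall>i<n. z i = x i) \<longrightarrow> k2 z = k2 x"
    proof (intro ballI exI[of _ "Lmax * L"] impI)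
      fix x z assume xX: "x \<in> XA N A" and zX: "z \<in> XA N A" and ag: "\<forall>i<Lmax * L. z i = x i"
      have "map (g z) [0..<L] = map (g x) [0..<L]"
      proof (rule map_cong[OF refl])
        fix i assume "i \<in> set [0..<L]"
        then have "Suc i \<le> L" by simp
        then have "Lmax * Suc i \<le> Lmax * L" by (rule mult_le_mono2)
        then have "\<forall>j<Lmax * Suc i. z j = x j" using ag by auto
        then show "g z i = g x i" using g_local[of i] xX zX by blast
      qed
      then show "k2 z = k2 x" unfolding k2_def by (simp only:)
    qed
  qed
  have cl1: "continuous_map (topXA M CM) (discrete_topology UNIV) (\<lambda>y. length (\<omega> (y 0)))"
  proof (rule loc_const_cont)
    show "\<forall>x\<in>XA M CM. length (\<omega> (x 0)) \<in> UNIV" by simp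
    show "\<forall>x\<in>XA M CM. \<exists>n. \<forall>z\<in>XA M CM. (\<forall>i<n. z i = x i) \<longrightarrow> length (\<omega> (z 0)) = length (\<omega> (x 0))"
      by (intro ballI exI[of _ "1"]) simp
  qed
  have cc: "continuous_map (topXA K B) (discrete_topology (UNIV::nat set)) (\<lambda>_. c)" for K B and c :: nat
    by (rule loc_const_cont) auto
  have orbit1: "\<forall>y\<in>XA M CM. (shift ^^ 0) (h (shift y)) = (shift ^^ length (\<omega> (y 0))) (h y)"
    using h_shift XB_ne by simp
  have homeo: "homeomorphic_maps (topXA M CM) (topXA N A) h g"
    unfolding homeomorphic_maps_def topspace_topXA using cont_h cont_g g_h h_g by blast
  show ?thesis unfolding cont_orbit_equiv_def
    apply (rule exI[of _ h], rule exI[of _ g], rule exI[of _ "\<lambda>_. 0"], rule exI[of _ "\<lambda>y. length (\<omega> (y 0))"],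
        rule exI[of _ k2], rule exI[of _ "\<lambda>_. L"])
    apply (intro conjI)
          apply (rule homeo)
         apply (rule cc)
        apply (rule cl1)
       apply (rule ck2)
      apply (rule cc)
     apply (rule orbit1)
    using orbit2 by blast
qed

end

theorem mainTheorem2:
  fixes N M :: nat and A :: "nat \<Rightarrow> nat \<Rightarrow> nat" and \<omega> :: "nat \<Rightarrow> nat list"
  assumes "zero_one_matrix N A"
    and "irreducible_matrix N A"
    and "\<not> permutation_matrix N A"
    and "right_markov_code N A M \<omega>"
  shows "cont_orbit_equiv M (code_matrix A \<omega>) N A"
proof -
  interpret rmc N A M \<omega> by unfold_locales (rule assms(4))
  show ?thesis by (rule main)
qed

end
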